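(* Let $b>0$, $\zeta>0$, $T>0$. Let $w:[0,T]\to[0,\infty)$ be a measurable, locally integrable function, $\mathcal Y:[0,T+b^{-1}]\to\mathbb R$ a function, and $E(u,t)\in\mathbb R$ for $0\le u\le t\le T$, such that for all $0\le u\le t\le T$, $w(t)\le w(u)-\frac b2\int_u^t w(s)\,ds+E(u,t)+\mathcal Y(t)-\mathcal Y(u)$. Assume further (i) $w(0)\le\zeta/2$; (ii) $\mathcal Y(t+s)-\mathcal Y(t)\le\zeta/8$ for all $t\in[0,T]$, $s\in[0,b^{-1}]$; (iii) $E(u,t)\le\zeta/8$ whenever $0\le t-u\le b^{-1}$. Then $\sup_{t\in[0,T]}w(t)<\zeta$.
   Context: In the paper this is applied with $w(t)=\|\mathbf w(t)\|$ the norm of the weighted amplitude of the stochastic CRN, $\mathcal Y$ a martingale noise term, and $E(u,t)$ an error term of order $\Omega^{-2}\mathcal M_{u,t}$ with $\mathcal M_{u,t}$ the number of reactions in $[u,t]$. *)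

theory Defs
  imports "HOL-Analysis.Analysis"
begin

end

theory Submission
  imports Defs
begin

lemma int_split_bound:
  fixes w :: "real \<Rightarrow> real" and s S t a :: real
  assumes wi: "set_integrable lborel {s..t} w"
    and nn: "\<And>x. x \<in> {s..t} \<Longrightarrow> w x \<ge> 0"
    and big: "\<And>x. x \<in> {S<..t} \<Longrightarrow> w x \<ge> a"
    and ord: "s \<le> S" "S \<le> t"
  shows "(LINT x:{s..t}|lborel. w x) \<ge> a * (t - S)"
proof -
  have un: "{s..t} = {s..S} \<union> {S<..t}" using ord by auto
  have i1: "set_integrable lborel {s..S} w"
    by (rule set_integrable_subset[OF wi]) (use ord in auto)
  have i2: "set_integrable lborel {S<..t} w"
    by (rule set_integrable_subset[OF wi]) (use ord in auto)
  have ic: "set_integrable lborel {S<..t} (\<lambda>_. a)"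
  proof -
    have "integrable lborel (\<lambda>x. a * indicator {S<..t} x)"
      by (intro integrable_mult_right integrable_real_indicator) (use ord in auto)
    then show ?thesis unfolding set_integrable_def by (simp add: mult.commute)
  qed
  have ic0: "set_integrable lborel {s..S} (\<lambda>_. 0::real)"
    unfolding set_integrable_def by simp
  have "(LINT x:{s..t}|lborel. w x) = (LINT x:{s..S}|lborel. w x) + (LINT x:{S<..t}|lborel. w x)"
    unfolding un by (rule set_integral_Un) (auto intro: i1 i2)
  moreover have "(LINT x:{s..S}|lborel. w x) \<ge> (LINT x:{s..S}|lborel. (0::real))"
    by (rule set_integral_mono[OF ic0 i1]) (use nn ord in auto)
  moreover have "(LINT x:{S<..t}|lborel. w x) \<ge> (LINT x:{S<..t}|lborel. a)"
    by (rule set_integral_mono[OF ic i2]) (use big in auto)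
  moreover have "(LINT x:{S<..t}|lborel. a) = (t - S) * a"
    using ord by (subst set_integral_const) (auto simp: measure_def)
  ultimately show ?thesis by (simp add: mult.commute)
qed


theorem mainTheorem4:
  fixes b \<zeta> T :: real
    and w :: "real \<Rightarrow> real"
    and Y :: "real \<Rightarrow> real"
    and E :: "real \<Rightarrow> real \<Rightarrow> real"
  assumes b_pos: "b > 0" and zeta_pos: "\<zeta> > 0" and T_pos: "T > 0"
    and w_nonneg: "\<And>t. t \<in> {0..T} \<Longrightarrow> w t \<ge> 0"
    and w_meas: "set_borel_measurable lborel {0..T} w"
    and w_int: "set_integrable lborel {0..T} w"
    and ineq: "\<And>u t. 0 \<le> u \<Longrightarrow> u \<le> t \<Longrightarrow> t \<le> T \<Longrightarrow>
        w t \<le> w u - b / 2 * (LINT s:{u..t}|lborel. w s) + E u t + Y t - Y u"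
    and init: "w 0 \<le> \<zeta> / 2"
    and Ybound: "\<And>t s. t \<in> {0..T} \<Longrightarrow> s \<in> {0..1/b} \<Longrightarrow> Y (t + s) - Y t \<le> \<zeta> / 8"
    and Ebound: "\<And>u t. 0 \<le> u \<Longrightarrow> u \<le> t \<Longrightarrow> t \<le> T \<Longrightarrow> t - u \<le> 1/b \<Longrightarrow> E u t \<le> \<zeta> / 8"
  shows "(SUP t\<in>{0..T}. ereal (w t)) < ereal \<zeta>"
proof -
  define a where "a = 7 * \<zeta> / 10"
  have wi: "set_integrable lborel {u..v} w" if "0 \<le> u" "v \<le> T" for u v
    by (rule set_integrable_subset[OF w_int]) (use that in auto)
  have claim: "\<exists>s. 0 \<le> s \<and> s \<le> t \<and> w s \<le> a \<and> t - s \<le> 1/b" if t: "0 \<le> t" "t \<le> T" for t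
  proof (rule ccontr)
    assume nc: "\<not> ?thesis"
    define A where "A = {s \<in> {0..t}. w s \<le> a}"
    have A0: "0 \<in> A" using t init zeta_pos unfolding A_def a_def by auto
    have bdd: "bdd_above A" unfolding A_def by (rule bdd_aboveI[of _ t]) auto
    define S where "S = Sup A"
    have sA: "x \<le> S" if "x \<in> A" for x using cSup_upper[OF that bdd] S_def by simp
    have S0: "0 \<le> S" using sA[OF A0] .
    have Slt: "S \<le> t - 1/b"
      unfolding S_def
    proof (rule cSup_least)
      show "A \<noteq> {}" using A0 by auto
      fix x assume "x \<in> A" then show "x \<le> t - 1/b" using nc unfolding A_def by force
    qed
    have "S - 1/(4*b) < S" using b_pos by simp
    then obtain s where sAA: "s \<in> A" and ss: "S - 1/(4*b) < s"
      using less_cSup_iff[of A "S - 1/(4*b)"] A0 bdd unfolding S_def by blast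
    have sS: "s \<le> S" using sA[OF sAA] .
    have s0: "0 \<le> s" "w s \<le> a" using sAA unfolding A_def by auto
    define t' where "t' = s + 1/b"
    have t't: "t' \<le> t" using sS Slt unfolding t'_def by simp
    have St': "S < t'" "t' - S \<ge> 3/(4*b)" using ss b_pos unfolding t'_def by (auto simp: field_simps)
    have big: "w x \<ge> a" if "x \<in> {S<..t'}" for x
    proof (rule ccontr)
      assume "\<not> a \<le> w x"
      then have "x \<in> A" unfolding A_def using that S0 t't by auto
      then show False using sA that by force
    qed
    have I: "(LINT x:{s..t'}|lborel. w x) \<ge> a * (t' - S)"
      by (rule int_split_bound[OF wi]) (use s0 t t't big sS St' w_nonneg in auto)
    have aS: "a * (t' - S) \<ge> a * (3/(4*b))"
      using St' zeta_pos unfolding a_def by (intro mult_left_mono) auto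
    have "b / 2 * (a * (3/(4*b))) = 3 * a / 8" using b_pos by (simp add: field_simps)
    then have bI: "b / 2 * (LINT x:{s..t'}|lborel. w x) \<ge> 3 * a / 8"
    proof -
      have "a * (3/(4*b)) \<le> (LINT x:{s..t'}|lborel. w x)" using I aS by linarith
      then have "b / 2 * (a * (3/(4*b))) \<le> b / 2 * (LINT x:{s..t'}|lborel. w x)"
        using b_pos by (intro mult_left_mono) auto
      then show ?thesis using \<open>b / 2 * (a * (3/(4*b))) = 3 * a / 8\<close> by linarith
    qed
    have st': "s \<le> t'" "t' - s = 1/b" using b_pos unfolding t'_def by auto
    have E: "E s t' \<le> \<zeta>/8" using Ebound[of s t'] s0 st' t t't by auto
    have sT: "s \<le> T" using st' t't t by linarith
    have Y: "Y t' - Y s \<le> \<zeta>/8" using sT Ybound[of s "1/b"] s0 t t't b_pos unfolding t'_def by auto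
    have "w t' \<le> w s - b / 2 * (LINT x:{s..t'}|lborel. w x) + E s t' + Y t' - Y s"
      using ineq[of s t'] s0 st' t t't by auto
    then have "w t' < a" using bI E Y s0 zeta_pos unfolding a_def by linarith
    then have "t' \<in> A" unfolding A_def using S0 St' t't by auto
    then show False using sA St' by force
  qed
  have bound: "w t \<le> 19 * \<zeta> / 20" if t: "t \<in> {0..T}" for t
  proof -
    obtain s where s: "0 \<le> s" "s \<le> t" "w s \<le> a" "t - s \<le> 1/b" using claim t by auto
    have I: "(LINT x:{s..t}|lborel. w x) \<ge> 0 * (t - t)"
      by (rule int_split_bound[OF wi]) (use s t w_nonneg in auto)
    have bI: "b / 2 * (LINT x:{s..t}|lborel. w x) \<ge> 0" using I b_pos by simp
    have E: "E s t \<le> \<zeta>/8" using Ebound[of s t] s t by auto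
    have Y: "Y t - Y s \<le> \<zeta>/8" using Ybound[of s "t - s"] s t by auto
    have "w t \<le> w s - b / 2 * (LINT x:{s..t}|lborel. w x) + E s t + Y t - Y s"
      using ineq[of s t] s t by auto
    then show ?thesis using bI E Y s unfolding a_def by linarith
  qed
  have "(SUP t\<in>{0..T}. ereal (w t)) \<le> ereal (19 * \<zeta> / 20)"
    by (rule SUP_least) (use bound in auto)
  also have "\<dots> < ereal \<zeta>" using zeta_pos by simp
  finally show ?thesis .
qed

end
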